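(* Let $\beta\in(0,1)$, let $c>0$ with $2c<1-\beta$, and set $$E_N=\Big\{\sum_{i=1}^{N} w_i^\beta\ge c^{-1}N^{1-\beta}\Big\}.$$ Then there exists $\eta>0$ such that $\mathbb P(E_N)=o(N^{-\eta})$ as $N\to\infty$.
   Context: $\Xi$ is a Poisson point process on $(0,\infty)$ with intensity measure $x^{-2}dx$, and $w_1>w_2>\cdots$ are its atoms listed in decreasing order. *)

theory Defs
  imports "HOL-Probability.Probability" "HOL-Library.Landau_Symbols"
begin

definition ppp_intensity :: "real measure" where
  "ppp_intensity = density lborel (\<lambda>x. indicator {0<..} x * ennreal (1 / x\<^sup>2))"

definition atom_count :: "(nat \<Rightarrow> real) \<Rightarrow> real set \<Rightarrow> nat" where
  "atom_count w A = card {i. w i \<in> A}"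

text \<open>w 0 > w 1 > ... are the atoms, in decreasing order, of a Poisson point process
  on (0,infinity) with intensity x^(-2) dx, defined on the probability space M.\<close>
definition ppp_atoms :: "'a measure \<Rightarrow> (nat \<Rightarrow> 'a \<Rightarrow> real) \<Rightarrow> bool" where
  "ppp_atoms M w \<longleftrightarrow>
     prob_space M \<and>
     (\<forall>i. w i \<in> borel_measurable M) \<and>
     (\<forall>\<omega>\<in>space M. (\<forall>i. 0 < w i \<omega>) \<and> (\<forall>i. w (Suc i) \<omega> < w i \<omega>) \<and>
                    (\<lambda>i. w i \<omega>) \<longlonglongrightarrow> 0) \<and>
     (\<forall>(J::nat set) (A::nat \<Rightarrow> real set) (a::real).
        finite J \<longrightarrow> 0 < a \<longrightarrow> (\<forall>j\<in>J. A j \<in> sets borel \<and> A j \<subseteq> {a..}) \<longrightarrow>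
        disjoint_family_on A J \<longrightarrow>
        prob_space.indep_vars M (\<lambda>_. count_space UNIV)
            (\<lambda>j \<omega>. atom_count (\<lambda>i. w i \<omega>) (A j)) J \<and>
        (\<forall>j\<in>J. \<forall>k::nat.
            prob_space.prob M {\<omega>\<in>space M. atom_count (\<lambda>i. w i \<omega>) (A j) = k}
              = exp (- measure ppp_intensity (A j)) * measure ppp_intensity (A j) ^ k / fact k))"

end

theory Submission
  imports Defs "HOL-Real_Asymp.Real_Asymp"
begin

lemma poisson_chernoff:
  fixes X :: "'a \<Rightarrow> nat"
  assumes P: "prob_space M" and Xm: "X \<in> measurable M (count_space UNIV)"
    and m: "0 \<le> m"
    and dist: "\<And>k. prob_space.prob M {\<omega>\<in>space M. X \<omega> = k} = exp (- m) * m ^ k / fact k"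
    and z: "1 \<le> z"
  shows "prob_space.prob M {\<omega>\<in>space M. a \<le> X \<omega>} \<le> exp (m * (z - 1)) / z ^ a"
proof -
  interpret prob_space M by (rule P)
  have meas: "{\<omega>\<in>space M. X \<omega> = k} \<in> sets M" for k
    using Xm by measurable
  have zpos: "0 < z" using z by simp
  define g where "g k = z ^ k / z ^ a" for k
  have g0: "0 \<le> g k" for k using zpos by (simp add: g_def)
  have "emeasure M {\<omega>\<in>space M. a \<le> X \<omega>} = (\<integral>\<^sup>+ \<omega>. indicator {\<omega>\<in>space M. a \<le> X \<omega>} \<omega> \<partial>M)"
    using Xm by (intro nn_integral_indicator[symmetric]) measurable
  also have "\<dots> \<le> (\<integral>\<^sup>+ \<omega>. ennreal (g (X \<omega>)) \<partial>M)"
  proof (intro nn_integral_mono)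
    fix \<omega> assume "\<omega> \<in> space M"
    show "indicator {\<omega>\<in>space M. a \<le> X \<omega>} \<omega> \<le> ennreal (g (X \<omega>))"
    proof (cases "a \<le> X \<omega>")
      case True
      have "z ^ a \<le> z ^ X \<omega>" using z True by (simp add: power_increasing)
      then have "1 \<le> g (X \<omega>)" using zpos by (simp add: g_def)
      then show ?thesis by (simp add: indicator_def)
    qed (simp add: indicator_def)
  qed
  also have "(\<integral>\<^sup>+ \<omega>. ennreal (g (X \<omega>)) \<partial>M) = (\<integral>\<^sup>+ \<omega>. (\<Sum>k. ennreal (g k) * indicator {\<omega>\<in>space M. X \<omega> = k} \<omega>) \<partial>M)"
  proof (intro nn_integral_cong)
    fix \<omega> assume om: "\<omega> \<in> space M"
    have "(\<lambda>k. ennreal (g k) * indicator {\<omega>\<in>space M. X \<omega> = k} \<omega>) = (\<lambda>k. if k = X \<omega> then ennreal (g k) else 0)"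
      using om by (auto simp: indicator_def)
    then show "ennreal (g (X \<omega>)) = (\<Sum>k. ennreal (g k) * indicator {\<omega>\<in>space M. X \<omega> = k} \<omega>)"
      using sums_unique[OF sums_single[of "X \<omega>" "\<lambda>k. ennreal (g k)"]] by simp
  qed
  also have "\<dots> = (\<Sum>k. \<integral>\<^sup>+ \<omega>. ennreal (g k) * indicator {\<omega>\<in>space M. X \<omega> = k} \<omega> \<partial>M)"
    by (rule nn_integral_suminf) (use meas in auto)
  also have "\<dots> = (\<Sum>k. ennreal (g k * (exp (- m) * m ^ k / fact k)))"
  proof (intro suminf_cong)
    fix k
    have "(\<integral>\<^sup>+ \<omega>. ennreal (g k) * indicator {\<omega>\<in>space M. X \<omega> = k} \<omega> \<partial>M) = ennreal (g k) * emeasure M {\<omega>\<in>space M. X \<omega> = k}"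
      using meas by (simp add: nn_integral_cmult_indicator)
    also have "\<dots> = ennreal (g k * (exp (- m) * m ^ k / fact k))"
      using dist[of k] g0 m by (simp add: emeasure_eq_measure ennreal_mult[symmetric])
    finally show "(\<integral>\<^sup>+ \<omega>. ennreal (g k) * indicator {\<omega>\<in>space M. X \<omega> = k} \<omega> \<partial>M) = ennreal (g k * (exp (- m) * m ^ k / fact k))" .
  qed
  also have "\<dots> = ennreal (exp (m * (z - 1)) / z ^ a)"
  proof (rule suminf_ennreal_eq)
    show "0 \<le> g k * (exp (- m) * m ^ k / fact k)" for k using g0 m by simp
    have S: "(\<lambda>k. (exp (- m) / z ^ a) * ((z*m) ^ k /\<^sub>R fact k)) sums ((exp (- m) / z ^ a) * exp (z*m))"
      by (rule sums_mult[OF exp_converges])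
    have e: "exp (- m) * exp (z*m) = exp (m * (z - 1))"
      by (simp add: mult_exp_exp algebra_simps)
    have V: "(exp (- m) / z ^ a) * exp (z*m) = exp (m * (z - 1)) / z ^ a"
      unfolding e[symmetric] by simp
    have F: "(\<lambda>k. (exp (- m) / z ^ a) * ((z*m) ^ k /\<^sub>R fact k)) = (\<lambda>k. g k * (exp (- m) * m ^ k / fact k))"
      by (auto simp: g_def power_mult_distrib divide_simps)
    show "(\<lambda>k. g k * (exp (- m) * m ^ k / fact k)) sums (exp (m * (z - 1)) / z ^ a)"
      using S unfolding F V .
  qed
  finally have "emeasure M {\<omega>\<in>space M. a \<le> X \<omega>} \<le> ennreal (exp (m * (z - 1)) / z ^ a)" .
  moreover have "0 \<le> exp (m * (z - 1)) / z ^ a" using zpos by simp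
  ultimately show ?thesis
    by (simp add: emeasure_eq_measure ennreal_le_iff)
qed


lemma intensity_Ici:
  assumes a: "0 < (a::real)"
  shows "measure ppp_intensity {a..} = 1/a"
proof -
  have "emeasure ppp_intensity {a..} = (\<integral>\<^sup>+ x. ennreal (indicator {a..} x * (1 / x ^ 2)) \<partial>lborel)"
    unfolding ppp_intensity_def
    apply (subst emeasure_density)
      apply (auto intro!: nn_integral_cong simp: indicator_def)
    using a apply auto
    done
  also have "\<dots> = ennreal (1 / (real (2 - 1) * a ^ (2 - 1)))"
    by (rule nn_integral_has_integral_lebesgue[OF _ has_integral_inverse_power_to_inf]) (use a in auto)
  finally show ?thesis using a by (simp add: measure_def)
qed

lemma ppp_K:
  assumes H: "ppp_atoms M w" and x: "0 < x"
  shows "(\<lambda>\<omega>. atom_count (\<lambda>i. w i \<omega>) {x..}) \<in> measurable M (count_space UNIV)"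
    and "\<And>k. prob_space.prob M {\<omega>\<in>space M. atom_count (\<lambda>i. w i \<omega>) {x..} = k}
              = exp (- (1/x)) * (1/x) ^ k / fact k"
proof -
  have P: "prob_space M" using H by (simp add: ppp_atoms_def)
  have main: "prob_space.indep_vars M (\<lambda>_. count_space UNIV)
            (\<lambda>j \<omega>. atom_count (\<lambda>i. w i \<omega>) ((\<lambda>_::nat. {x..}) j)) {0::nat} \<and>
        (\<forall>j\<in>{0::nat}. \<forall>k::nat.
            prob_space.prob M {\<omega>\<in>space M. atom_count (\<lambda>i. w i \<omega>) ((\<lambda>_::nat. {x..}) j) = k}
              = exp (- measure ppp_intensity ((\<lambda>_::nat. {x..}) j)) * measure ppp_intensity ((\<lambda>_::nat. {x..}) j) ^ k / fact k)"
    using H x unfolding ppp_atoms_def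
    apply (elim conjE)
    apply (drule spec[where x="{0::nat}"], drule spec[where x="\<lambda>_. {x..}"], drule spec[where x=x])
    apply (auto simp: disjoint_family_on_def)
    done
  then show "(\<lambda>\<omega>. atom_count (\<lambda>i. w i \<omega>) {x..}) \<in> measurable M (count_space UNIV)"
    using main unfolding prob_space.indep_vars_def[OF P] by auto
  show "\<And>k. prob_space.prob M {\<omega>\<in>space M. atom_count (\<lambda>i. w i \<omega>) {x..} = k}
              = exp (- (1/x)) * (1/x) ^ k / fact k"
    using main intensity_Ici[OF x] by auto
qed

lemma sum_powr_bound:
  assumes b: "0 < \<beta>" "\<beta> < 1"
  shows "(\<Sum>i<N. real (Suc i) powr (-\<beta>)) \<le> real N powr (1-\<beta>) / (1-\<beta>)"
proof (induction N)
  case 0 then show ?case by simp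
next
  case (Suc n)
  define s where "s = 1 - \<beta>"
  have s: "0 < s" "s < 1" using b by (auto simp: s_def)
  have step: "real (Suc n) powr (-\<beta>) \<le> (real (Suc n) powr s - real n powr s) / s"
  proof (cases "n = 0")
    case True then show ?thesis using s by simp
  next
    case False
    define a where "a = real n"
    define bb where "bb = real (Suc n)"
    have a0: "0 < a" using False by (simp add: a_def)
    have ab: "bb = a + 1" by (simp add: a_def bb_def)
    have b0: "0 < bb" using a0 ab by simp
    have Y: "(a/bb) powr s * 1 powr (1-s) \<le> s * (a/bb) + (1-s) * 1"
      by (rule Youngs_inequality_0) (use s a0 b0 in auto)
    define q where "q = bb powr (-\<beta>)"
    have q0: "0 < q" using b0 by (simp add: q_def)
    have p: "bb powr s = bb * q"
      unfolding q_def s_def using b0 by (simp add: powr_diff powr_minus divide_inverse)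
    have "a powr s / bb powr s \<le> s * (a/bb) + (1-s)"
      using Y a0 b0 by (simp add: powr_divide)
    then have "a powr s \<le> (s * (a/bb) + (1-s)) * bb powr s"
      using b0 by (simp add: divide_le_eq)
    also have "\<dots> = q * (s * a + (1 - s) * bb)"
      unfolding p using b0 by (simp add: field_simps)
    also have "\<dots> = bb * q - s * q"
      unfolding ab by (simp add: algebra_simps)
    finally have "s * q \<le> bb powr s - a powr s" unfolding p by simp
    then show ?thesis using s unfolding q_def a_def bb_def
      by (simp add: s_def field_simps)
  qed
  have "(\<Sum>i<Suc n. real (Suc i) powr (-\<beta>)) = (\<Sum>i<n. real (Suc i) powr (-\<beta>)) + real (Suc n) powr (-\<beta>)"
    by simp
  also have "\<dots> \<le> real n powr s / s + (real (Suc n) powr s - real n powr s) / s"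
    using Suc.IH step unfolding s_def by linarith
  also have "\<dots> = real (Suc n) powr s / s" using s by (simp add: field_simps)
  finally show ?case unfolding s_def .
qed

lemma finite_atoms:
  assumes t: "(\<lambda>i. v i) \<longlonglongrightarrow> (0::real)" and x: "0 < x"
  shows "finite {i. v i \<in> {x..}}"
proof -
  from t x have "eventually (\<lambda>i. v i < x) sequentially"
    by (rule order_tendstoD)
  then obtain n0 where "\<And>i. i \<ge> n0 \<Longrightarrow> v i < x" by (auto simp: eventually_sequentially)
  then have "{i. v i \<in> {x..}} \<subseteq> {..<n0}" by (force simp: not_le[symmetric])
  then show ?thesis by (rule finite_subset) simp
qed

lemma atom_count_ge:
  assumes t: "(\<lambda>i. v i) \<longlonglongrightarrow> (0::real)" and x: "0 < x"
    and dec: "\<And>i. v (Suc i) < v i" and vn: "x \<le> v n"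
  shows "Suc n \<le> atom_count v {x..}"
proof -
  have "decseq v" using dec by (intro decseq_SucI less_imp_le)
  then have "{..n} \<subseteq> {i. v i \<in> {x..}}" using vn by (auto dest: decseqD)
  from card_mono[OF finite_atoms[OF t x] this] show ?thesis by (simp add: atom_count_def)
qed


theorem lemma4p3:
  fixes M :: "'a measure" and w :: "nat \<Rightarrow> 'a \<Rightarrow> real" and \<beta> c :: real
  assumes "ppp_atoms M w"
    and "0 < \<beta>" and "\<beta> < 1"
    and "0 < c" and "2 * c < 1 - \<beta>"
  shows "\<exists>\<eta>>0. (\<lambda>N::nat. prob_space.prob M
            {\<omega>\<in>space M. (\<Sum>i<N. w i \<omega> powr \<beta>) \<ge> (1 / c) * real N powr (1 - \<beta>)})
          \<in> o(\<lambda>N. real N powr (- \<eta>))"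
proof -
  note H = assms(1)
  have P: "prob_space M" using H by (simp add: ppp_atoms_def)
  interpret prob_space M by (rule P)
  have wpos: "\<And>\<omega> i. \<omega> \<in> space M \<Longrightarrow> 0 < w i \<omega>"
   and wdec: "\<And>\<omega> i. \<omega> \<in> space M \<Longrightarrow> w (Suc i) \<omega> < w i \<omega>"
   and wlim: "\<And>\<omega>. \<omega> \<in> space M \<Longrightarrow> (\<lambda>i. w i \<omega>) \<longlonglongrightarrow> 0"
    using H by (auto simp: ppp_atoms_def)
  define s where "s = 1 - \<beta>"
  define C where "C = 1 / c"
  define eps where "eps = C - 2 powr \<beta> / s"
  define \<gamma> where "\<gamma> = s / 2"
  define \<kappa> where "\<kappa> = ln (3/2::real) - 1/4"
  define K where "K t \<omega> = atom_count (\<lambda>i. w i \<omega>) {t..}" for t \<omega>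
  define i0 where "i0 N = nat \<lceil>real N powr \<gamma>\<rceil>" for N :: nat
  define y where "y N = (eps * real N powr s / real (i0 N)) powr (1/\<beta>)" for N :: nat
  define xx where "xx i = 2 / real (Suc i)" for i :: nat
  have s0: "0 < s" "s < 1" using assms by (auto simp: s_def)
  have C0: "0 < C" using assms by (simp add: C_def)
  have "2 powr \<beta> < 2 powr 1" using assms by (intro powr_less_mono) auto
  then have two: "2 powr \<beta> < 2" by simp
  have "2 < C * s" using assms by (simp add: C_def s_def field_simps)
  then have eps0: "0 < eps" using two s0 by (simp add: eps_def field_simps)
  have g0: "0 < \<gamma>" using s0 by (simp add: \<gamma>_def)
  have k0: "0 < \<kappa>"
  proof -
    have "ln (2/3::real) \<le> 2/3 - 1" by (rule ln_le_minus_one) simp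
    moreover have "ln (3/2::real) = - ln (2/3)" by (simp add: ln_div)
    ultimately show ?thesis by (simp add: \<kappa>_def)
  qed
  have Kmeas: "K t \<in> measurable M (count_space UNIV)" if "0 < t" for t
    unfolding K_def by (rule ppp_K(1)[OF H that])
  have Kdist: "prob {\<omega>\<in>space M. K t \<omega> = k} = exp (- (1/t)) * (1/t) ^ k / fact k" if "0 < t" for t k
    unfolding K_def by (rule ppp_K(2)[OF H that])
  have Kset: "{\<omega>\<in>space M. a \<le> K t \<omega>} \<in> sets M" if "0 < t" for t a
    using Kmeas[OF that] by measurable
  have i0_eq: "real (i0 N) = real_of_int \<lceil>real N powr \<gamma>\<rceil>" for N
  proof -
    have "0 \<le> real N powr \<gamma>" by simp
    then have "0 \<le> \<lceil>real N powr \<gamma>\<rceil>" by linarith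
    then show ?thesis unfolding i0_def by simp
  qed
  have i0_ge: "real N powr \<gamma> \<le> real (i0 N)" for N
    unfolding i0_eq by (rule le_of_int_ceiling)
  have i0_le: "real (i0 N) \<le> real N powr \<gamma> + 1" for N
    unfolding i0_eq using ceiling_correct[of "real N powr \<gamma>"] by linarith
  have i0_pos: "1 \<le> i0 N" if "1 \<le> N" for N
  proof -
    have "0 < real N powr \<gamma>" using that by simp
    then show ?thesis unfolding i0_def by linarith
  qed
  have y0: "0 < y N" if "1 \<le> N" for N
    using i0_pos[OF that] eps0 that unfolding y_def by simp
  have ypow: "y N powr \<beta> = eps * real N powr s / real (i0 N)" if "1 \<le> N" for N
    using i0_pos[OF that] eps0 that assms unfolding y_def by (simp add: powr_powr)
  have PB0: "prob {\<omega>\<in>space M. 1 \<le> K (y N) \<omega>} \<le> 1 / y N" if "1 \<le> N" for N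
  proof -
    have yp: "0 < y N" by (rule y0[OF that])
    have "{\<omega>\<in>space M. 1 \<le> K (y N) \<omega>} = space M - {\<omega>\<in>space M. K (y N) \<omega> = 0}" by auto
    then have "prob {\<omega>\<in>space M. 1 \<le> K (y N) \<omega>} = 1 - prob {\<omega>\<in>space M. K (y N) \<omega> = 0}"
      using Kmeas[OF yp] by (simp add: prob_compl)
    also have "\<dots> = 1 - exp (- (1 / y N))" using Kdist[OF yp, of 0] by simp
    also have "\<dots> \<le> 1 / y N" using exp_ge_add_one_self[of "- (1 / y N)"] by simp
    finally show ?thesis .
  qed
  have PBi: "prob {\<omega>\<in>space M. Suc i \<le> K (xx i) \<omega>} \<le> exp (- \<kappa> * real (Suc i))" for i
  proof -
    have xp: "0 < xx i" by (simp add: xx_def)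
    have "prob {\<omega>\<in>space M. Suc i \<le> K (xx i) \<omega>} \<le> exp ((1 / xx i) * (3/2 - 1)) / (3/2) ^ Suc i"
      by (rule poisson_chernoff[OF P Kmeas[OF xp]]) (use xp Kdist[OF xp] in auto)
    also have "(3/2::real) ^ Suc i = exp (real (Suc i) * ln (3/2))"
      by (simp only: exp_of_nat_mult) simp
    also have "exp ((1 / xx i) * (3/2 - 1)) / exp (real (Suc i) * ln (3/2)) = exp (- \<kappa> * real (Suc i))"
      by (simp add: exp_diff[symmetric] xx_def \<kappa>_def algebra_simps)
    finally show ?thesis .
  qed
  define E where "E N = {\<omega>\<in>space M. (\<Sum>i<N. w i \<omega> powr \<beta>) \<ge> C * real N powr s}" for N
  have incl: "E N \<subseteq> {\<omega>\<in>space M. 1 \<le> K (y N) \<omega>} \<union> (\<Union>i\<in>{i0 N..<N}. {\<omega>\<in>space M. Suc i \<le> K (xx i) \<omega>})"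
    if N1: "1 \<le> N" for N
  proof
    fix \<omega> assume om: "\<omega> \<in> E N"
    then have sp: "\<omega> \<in> space M" by (simp add: E_def)
    show "\<omega> \<in> {\<omega>\<in>space M. 1 \<le> K (y N) \<omega>} \<union> (\<Union>i\<in>{i0 N..<N}. {\<omega>\<in>space M. Suc i \<le> K (xx i) \<omega>})"
    proof (rule ccontr)
      assume nb: "\<not> ?thesis"
      have yp: "0 < y N" by (rule y0[OF N1])
      have w0: "w 0 \<omega> < y N"
      proof (rule ccontr)
        assume "\<not> w 0 \<omega> < y N"
        then have "Suc 0 \<le> K (y N) \<omega>" unfolding K_def
          by (intro atom_count_ge[OF wlim[OF sp] yp wdec[OF sp]]) simp
        then show False using nb sp by auto
      qed
      have wi: "w i \<omega> < xx i" if "i \<in> {i0 N..<N}" for i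
      proof (rule ccontr)
        assume "\<not> w i \<omega> < xx i"
        then have "Suc i \<le> K (xx i) \<omega>" unfolding K_def
          by (intro atom_count_ge[OF wlim[OF sp] _ wdec[OF sp]]) (auto simp: xx_def)
        then show False using nb sp that by auto
      qed
      have dec: "decseq (\<lambda>i. w i \<omega>)" using wdec[OF sp] by (intro decseq_SucI less_imp_le)
      have pt: "w i \<omega> powr \<beta> \<le> (if i < i0 N then w 0 \<omega> powr \<beta> else 0) + xx i powr \<beta>" if "i < N" for i
      proof (cases "i < i0 N")
        case True
        have "w i \<omega> \<le> w 0 \<omega>" using decseqD[OF dec, of 0 i] by simp
        then have "w i \<omega> powr \<beta> \<le> w 0 \<omega> powr \<beta>"
          using wpos[OF sp, of i] assms by (intro powr_mono2) auto
        then have "w i \<omega> powr \<beta> \<le> w 0 \<omega> powr \<beta> + xx i powr \<beta>"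
          by (metis add_increasing2 powr_ge_zero)
        then show ?thesis using True by simp
      next
        case False
        then have "w i \<omega> < xx i" using wi that by auto
        then have "w i \<omega> powr \<beta> \<le> xx i powr \<beta>"
          using wpos[OF sp, of i] assms by (intro powr_mono2) auto
        then show ?thesis using False by simp
      qed
      have "(\<Sum>i<N. w i \<omega> powr \<beta>) \<le> (\<Sum>i<N. (if i < i0 N then w 0 \<omega> powr \<beta> else 0) + xx i powr \<beta>)"
        using pt by (intro sum_mono) auto
      also have "\<dots> = (\<Sum>i<N. (if i < i0 N then w 0 \<omega> powr \<beta> else 0)) + (\<Sum>i<N. xx i powr \<beta>)"
        by (rule sum.distrib)
      also have "(\<Sum>i<N. (if i < i0 N then w 0 \<omega> powr \<beta> else 0)) = (\<Sum>i\<in>{..<N} \<inter> {..<i0 N}. w 0 \<omega> powr \<beta>)"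
        using sum.inter_restrict[of "{..<N}" "\<lambda>_. w 0 \<omega> powr \<beta>" "{..<i0 N}"] by simp
      also have "\<dots> = real (card ({..<N} \<inter> {..<i0 N})) * w 0 \<omega> powr \<beta>" by simp
      also have "\<dots> \<le> real (i0 N) * w 0 \<omega> powr \<beta>"
      proof -
        have "card ({..<N} \<inter> {..<i0 N}) \<le> card {..<i0 N}" by (intro card_mono) auto
        then show ?thesis by (intro mult_right_mono) auto
      qed
      also have "real (i0 N) * w 0 \<omega> powr \<beta> < real (i0 N) * y N powr \<beta>"
        using i0_pos[OF N1] w0 wpos[OF sp, of 0] assms by (intro mult_strict_left_mono powr_less_mono2) auto
      also have "\<dots> = eps * real N powr s" using ypow[OF N1] i0_pos[OF N1] by simp
      also have "(\<Sum>i<N. xx i powr \<beta>) = 2 powr \<beta> * (\<Sum>i<N. real (Suc i) powr (-\<beta>))"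
        unfolding sum_distrib_left
      proof (intro sum.cong refl)
        fix i
        have "xx i powr \<beta> = 2 powr \<beta> / real (Suc i) powr \<beta>"
          unfolding xx_def by (rule powr_divide)
        then show "xx i powr \<beta> = 2 powr \<beta> * real (Suc i) powr (-\<beta>)"
          by (simp add: powr_minus divide_inverse)
      qed
      also have "\<dots> \<le> 2 powr \<beta> * (real N powr s / s)"
        using sum_powr_bound[OF assms(2,3), of N] by (intro mult_left_mono) (auto simp: s_def)
      finally have "(\<Sum>i<N. w i \<omega> powr \<beta>) < eps * real N powr s + 2 powr \<beta> * (real N powr s / s)"
        by simp
      also have "\<dots> = C * real N powr s" using s0 by (simp add: eps_def field_simps)
      finally show False using om by (simp add: E_def)
    qed
  qed
  define g where "g N = ((real N powr \<gamma> + 1) / (eps * real N powr s)) powr (1/\<beta>)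
                       + real N * exp (- \<kappa> * real N powr \<gamma>)" for N :: nat
  have PE: "prob (E N) \<le> g N" if N1: "1 \<le> N" for N
  proof -
    have yp: "0 < y N" by (rule y0[OF N1])
    have sets_i: "(\<lambda>i. {\<omega>\<in>space M. Suc i \<le> K (xx i) \<omega>}) ` {i0 N..<N} \<subseteq> sets M"
      using Kset by (auto simp: xx_def)
    have "prob (E N) \<le> prob ({\<omega>\<in>space M. 1 \<le> K (y N) \<omega>} \<union> (\<Union>i\<in>{i0 N..<N}. {\<omega>\<in>space M. Suc i \<le> K (xx i) \<omega>}))"
      using incl[OF N1] sets_i Kset[OF yp] by (intro finite_measure_mono) auto
    also have "\<dots> \<le> prob {\<omega>\<in>space M. 1 \<le> K (y N) \<omega>} + prob (\<Union>i\<in>{i0 N..<N}. {\<omega>\<in>space M. Suc i \<le> K (xx i) \<omega>})"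
      using sets_i Kset[OF yp] by (intro measure_Un_le) auto
    also have "prob (\<Union>i\<in>{i0 N..<N}. {\<omega>\<in>space M. Suc i \<le> K (xx i) \<omega>}) \<le> (\<Sum>i\<in>{i0 N..<N}. prob {\<omega>\<in>space M. Suc i \<le> K (xx i) \<omega>})"
      using sets_i by (intro finite_measure_subadditive_finite) auto
    also have "\<dots> \<le> (\<Sum>i\<in>{i0 N..<N}. exp (- \<kappa> * real N powr \<gamma>))"
    proof (intro sum_mono)
      fix i assume "i \<in> {i0 N..<N}"
      then have "real N powr \<gamma> \<le> real (Suc i)" using i0_ge[of N] by auto
      then have "exp (- \<kappa> * real (Suc i)) \<le> exp (- \<kappa> * real N powr \<gamma>)" using k0 by simp
      then show "prob {\<omega>\<in>space M. Suc i \<le> K (xx i) \<omega>} \<le> exp (- \<kappa> * real N powr \<gamma>)"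
        using PBi[of i] by linarith
    qed
    also have "\<dots> \<le> real N * exp (- \<kappa> * real N powr \<gamma>)" by simp
    also have "prob {\<omega>\<in>space M. 1 \<le> K (y N) \<omega>} \<le> 1 / y N" by (rule PB0[OF N1])
    also have "1 / y N = (real (i0 N) / (eps * real N powr s)) powr (1/\<beta>)"
      unfolding y_def using eps0 i0_pos[OF N1] N1 by (simp add: powr_divide)
    also have "\<dots> \<le> ((real N powr \<gamma> + 1) / (eps * real N powr s)) powr (1/\<beta>)"
      using eps0 N1 i0_le[of N] assms by (intro powr_mono2 divide_right_mono) auto
    finally show ?thesis by (simp add: g_def)
  qed
  have go: "g \<in> o(\<lambda>N. real N powr (- (s/(4*\<beta>))))"
    unfolding g_def \<gamma>_def using s0 eps0 k0 assms(2) by real_asymp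
  have "(\<lambda>N. prob (E N)) \<in> o(\<lambda>N. real N powr (- (s/(4*\<beta>))))"
  proof (rule landau_o.smallI)
    fix e :: real assume e: "0 < e"
    have "eventually (\<lambda>N. norm (g N) \<le> e * norm (real N powr (- (s/(4*\<beta>))))) sequentially"
      by (rule landau_o.smallD[OF go e])
    moreover have "eventually (\<lambda>N::nat. 1 \<le> N) sequentially" by (rule eventually_ge_at_top)
    ultimately show "eventually (\<lambda>N. norm (prob (E N)) \<le> e * norm (real N powr (- (s/(4*\<beta>))))) sequentially"
    proof eventually_elim
      case (elim N)
      then show ?case using PE[of N] by auto
    qed
  qed
  moreover have "0 < s/(4*\<beta>)" using s0 assms by simp
  ultimately show ?thesis unfolding E_def C_def s_def by blast
qed

end
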